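(* Let $N\ge1$, $1\le S\le N$, $L$ a band-width vector, $\dot W$ an $L$-admissible matrix, $W_\varepsilon=\mathrm{Id}+\varepsilon\dot W$, $\beta\in\Gamma$, $\alpha$ the $S$-banded vector with band vector $\beta$ and band-width vector $L$, $\mathcal P_\varepsilon$ the associated transfer operator, and $k\in\mathbb Z$. Assume $S=1$ or $k=0$. Let $\{f^{(1)}_k,\dots,f^{(N)}_k\}$ be an orthonormal eigenbasis of $e^{-2\pi ik\beta_1}\dot W$ with corresponding eigenvalues $\hat\lambda^{(1)}_k,\dots,\hat\lambda^{(N)}_k$. Then for every $\varepsilon>0$ and every $\ell$, $F^{(\ell)}_k(j,x)=f^{(\ell)}_k(j)e^{2\pi ikx}$ is an eigenfunction of $\mathcal P_\varepsilon$ with eigenvalue $\lambda^{(\ell)}_{k,\varepsilon}=e^{-2\pi ik\beta_1}+\varepsilon\hat\lambda^{(\ell)}_k$, and these are (up to scalar multiples) all eigenfunctions of $\mathcal P_\varepsilon$ of the form $f(j)e^{2\pi ikx}$. In particular, the $L^2(M)$-orthogonal projection $\Pi^{(\ell)}_{k,\varepsilon}$ onto the eigenfunction with eigenvalue $\lambda^{(\ell)}_{k,\varepsilon}$ equals, for every $\varepsilon>0$, the $L^2(M)$-orthogonal projection $\Pi^{(\ell)}_k$ onto $\operatorname{span}\{F^{(\ell)}_k\}$.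
   Context: $\mathbb S^1=\mathbb R/\mathbb Z$, $M=\{1,\dots,N\}\times\mathbb S^1$ with the product of the uniform probability and Lebesgue measure; $L^2(M)$ complex. For $\alpha\in\mathbb R^N$, $(\mathcal P_\varepsilon F)(j,x)=\sum_{j'=1}^N(W_\varepsilon)_{jj'}F(j',x-\alpha_j)$. A band-width vector is $L=(L_1,\dots,L_S)$ of positive integers with $\sum_sL_s=N$; $N_0=0$, $N_s=N_{s-1}+L_s$, $B_s=\{j:N_{s-1}<j\le N_s\}$; for distinct reals $\beta_1,\dots,\beta_S$ the $S$-banded vector $\alpha$ has $\alpha_j=\beta_s$ for $j\in B_s$. $\dot W$ is $L$-admissible if it is real symmetric and (1) $\dot W_{ij}\ge0$ for $i\ne j$, $\sum_j\dot W_{ij}=0$ for all $i$; (2) $\dot W$ has $N$ distinct eigenvalues; (3) each $\hat W_s=(\dot W_{jk})_{j,k\in B_s}$ has $L_s$ distinct eigenvalues. $\Gamma=\{\beta\in\mathbb R^S: e^{-2\pi ik\beta_{s_1}}\neq e^{-2\pi ik\beta_{s_2}}\text{ for all }k\ne0,\ s_1\ne s_2\}$. *)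

theory Defs
  imports "HOL-Analysis.Analysis"
begin

text \<open>Indices j of the space M = {1..N} x S^1 are natural numbers in {1..N}; functions on M
  are represented as maps nat => real => complex, the second argument being a real number
  read modulo 1 (all functions considered are 1-periodic in x).\<close>

definition band_width :: "nat \<Rightarrow> nat \<Rightarrow> (nat \<Rightarrow> nat) \<Rightarrow> bool" where
  "band_width N S L \<longleftrightarrow> (\<forall>s\<in>{1..S}. 0 < L s) \<and> (\<Sum>s=1..S. L s) = N"

definition band_end :: "(nat \<Rightarrow> nat) \<Rightarrow> nat \<Rightarrow> nat" where
  "band_end L s = (\<Sum>i=1..s. L i)"

definition band :: "(nat \<Rightarrow> nat) \<Rightarrow> nat \<Rightarrow> nat set" where
  "band L s = {j. band_end L (s - 1) < j \<and> j \<le> band_end L s}"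

definition is_eigenvalue_on :: "nat set \<Rightarrow> (nat \<Rightarrow> nat \<Rightarrow> real) \<Rightarrow> real \<Rightarrow> bool" where
  "is_eigenvalue_on I A mu \<longleftrightarrow>
     (\<exists>v::nat \<Rightarrow> real. (\<exists>i\<in>I. v i \<noteq> 0) \<and> (\<forall>i\<in>I. (\<Sum>j\<in>I. A i j * v j) = mu * v i))"

definition has_distinct_eigenvalues_on :: "nat set \<Rightarrow> (nat \<Rightarrow> nat \<Rightarrow> real) \<Rightarrow> bool" where
  "has_distinct_eigenvalues_on I A \<longleftrightarrow> card {mu. is_eigenvalue_on I A mu} = card I"

definition admissible :: "nat \<Rightarrow> nat \<Rightarrow> (nat \<Rightarrow> nat) \<Rightarrow> (nat \<Rightarrow> nat \<Rightarrow> real) \<Rightarrow> bool" where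
  "admissible N S L Wd \<longleftrightarrow>
     (\<forall>i\<in>{1..N}. \<forall>j\<in>{1..N}. Wd i j = Wd j i) \<and>
     (\<forall>i\<in>{1..N}. \<forall>j\<in>{1..N}. i \<noteq> j \<longrightarrow> 0 \<le> Wd i j) \<and>
     (\<forall>i\<in>{1..N}. (\<Sum>j=1..N. Wd i j) = 0) \<and>
     has_distinct_eigenvalues_on {1..N} Wd \<and>
     (\<forall>s\<in>{1..S}. has_distinct_eigenvalues_on (band L s) Wd)"

definition Gamma_set :: "nat \<Rightarrow> (nat \<Rightarrow> real) set" where
  "Gamma_set S = {\<beta>. \<forall>k::int. k \<noteq> 0 \<longrightarrow> (\<forall>s1\<in>{1..S}. \<forall>s2\<in>{1..S}. s1 \<noteq> s2 \<longrightarrow>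
       cis (- 2 * pi * of_int k * \<beta> s1) \<noteq> cis (- 2 * pi * of_int k * \<beta> s2))}"

definition banded :: "nat \<Rightarrow> (nat \<Rightarrow> nat) \<Rightarrow> (nat \<Rightarrow> real) \<Rightarrow> (nat \<Rightarrow> real) \<Rightarrow> bool" where
  "banded S L \<beta> \<alpha> \<longleftrightarrow> (\<forall>s\<in>{1..S}. \<forall>j\<in>band L s. \<alpha> j = \<beta> s)"

definition W_eps :: "real \<Rightarrow> (nat \<Rightarrow> nat \<Rightarrow> real) \<Rightarrow> nat \<Rightarrow> nat \<Rightarrow> real" where
  "W_eps \<epsilon> Wd i j = (if i = j then 1 else 0) + \<epsilon> * Wd i j"

definition transfer_op ::
  "nat \<Rightarrow> (nat \<Rightarrow> nat \<Rightarrow> real) \<Rightarrow> (nat \<Rightarrow> real) \<Rightarrow> (nat \<Rightarrow> real \<Rightarrow> complex) \<Rightarrow> nat \<Rightarrow> real \<Rightarrow> complex" where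
  "transfer_op N W \<alpha> F j x = (\<Sum>j'=1..N. complex_of_real (W j j') * F j' (x - \<alpha> j))"

definition is_eigenfunction ::
  "nat \<Rightarrow> ((nat \<Rightarrow> real \<Rightarrow> complex) \<Rightarrow> nat \<Rightarrow> real \<Rightarrow> complex) \<Rightarrow> (nat \<Rightarrow> real \<Rightarrow> complex) \<Rightarrow> complex \<Rightarrow> bool" where
  "is_eigenfunction N P F mu \<longleftrightarrow>
     (\<exists>j\<in>{1..N}. \<exists>x. F j x \<noteq> 0) \<and> (\<forall>j\<in>{1..N}. \<forall>x. P F j x = mu * F j x)"

definition fourier_fun :: "(nat \<Rightarrow> complex) \<Rightarrow> int \<Rightarrow> nat \<Rightarrow> real \<Rightarrow> complex" where
  "fourier_fun f k j x = f j * cis (2 * pi * of_int k * x)"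

text \<open>L^2(M) inner product (uniform probability on {1..N} times Lebesgue on [0,1]).\<close>
definition L2_inner :: "nat \<Rightarrow> (nat \<Rightarrow> real \<Rightarrow> complex) \<Rightarrow> (nat \<Rightarrow> real \<Rightarrow> complex) \<Rightarrow> complex" where
  "L2_inner N F G = (\<Sum>j=1..N. integral {0..1} (\<lambda>x. F j x * cnj (G j x))) / of_nat N"

definition L2_proj :: "nat \<Rightarrow> (nat \<Rightarrow> real \<Rightarrow> complex) \<Rightarrow> (nat \<Rightarrow> real \<Rightarrow> complex) \<Rightarrow> nat \<Rightarrow> real \<Rightarrow> complex" where
  "L2_proj N G H j x = (L2_inner N H G / L2_inner N G G) * G j x"

end

theory Submission
  imports Defs "Jordan_Normal_Form.Determinant"
begin

lemma sum_shift1: "(\<Sum>j<N. g (Suc j)) = (\<Sum>j=1..N. (g j :: 'a::comm_monoid_add))"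
  by (induct N) (simp_all add: sum.cl_ivl_Suc)

lemma onb_complete:
  fixes f :: "nat \<Rightarrow> nat \<Rightarrow> complex"
  assumes orth: "\<forall>l\<in>{1..N}. \<forall>m\<in>{1..N}. (\<Sum>j=1..N. f l j * cnj (f m j)) = (if l = m then 1 else 0)"
    and i: "i \<in> {1..N}" and j: "j \<in> {1..N}"
  shows "(\<Sum>l=1..N. cnj (f l i) * f l j) = (if i = j then 1 else 0)"
proof -
  define A where "A = Matrix.mat N N (\<lambda>(l,j). f (Suc l) (Suc j))"
  define B where "B = Matrix.mat N N (\<lambda>(j,m). cnj (f (Suc m) (Suc j)))"
  have A: "A \<in> carrier_mat N N" and B: "B \<in> carrier_mat N N" by (auto simp: A_def B_def)
  have "A * B = 1\<^sub>m N"
  proof (rule eq_matI)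
    fix a b assume ab: "a < dim_row (1\<^sub>m N)" "b < dim_col (1\<^sub>m N)"
    have "(A * B) $$ (a, b) = (\<Sum>j<N. f (Suc a) (Suc j) * cnj (f (Suc b) (Suc j)))"
      using ab by (auto simp: A_def B_def scalar_prod_def lessThan_atLeast0 intro!: sum.cong)
    also have "\<dots> = (\<Sum>j=1..N. f (Suc a) j * cnj (f (Suc b) j))"
      by (rule sum_shift1[where g = "\<lambda>j. f (Suc a) j * cnj (f (Suc b) j)"])
    also have "\<dots> = (if a = b then 1 else 0)" using orth ab by auto
    finally show "(A * B) $$ (a, b) = 1\<^sub>m N $$ (a, b)" using ab by auto
  qed (auto simp: A_def B_def)
  hence BA: "B * A = 1\<^sub>m N" using mat_mult_left_right_inverse[OF A B] by blast
  have "(B * A) $$ (i - 1, j - 1) = (\<Sum>l<N. cnj (f (Suc l) (Suc (i - 1))) * f (Suc l) (Suc (j - 1)))"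
    using i j by (auto simp: A_def B_def scalar_prod_def lessThan_atLeast0 intro!: sum.cong)
  also have "\<dots> = (\<Sum>l=1..N. cnj (f l i) * f l j)"
    using sum_shift1[where g = "\<lambda>l. cnj (f l i) * f l j"] i j by simp
  finally have "(\<Sum>l=1..N. cnj (f l i) * f l j) = 1\<^sub>m N $$ (i - 1, j - 1)" using BA by simp
  moreover have "(i - 1 = j - 1) = (i = j)" using i j by auto
  moreover have "i - 1 < N" "j - 1 < N" using i j by auto
  ultimately show ?thesis by (simp add: index_one_mat)
qed

lemma aux_distr:
  fixes a b :: "nat \<Rightarrow> complex"
  shows "(\<Sum>i\<in>I. (a i + e * b i) * K) = K * ((\<Sum>i\<in>I. a i) + e * (\<Sum>i\<in>I. b i))"
proof -
  have "(\<Sum>i\<in>I. (a i + e * b i) * K) = (\<Sum>i\<in>I. (a i + e * b i)) * K" by (rule sum_distrib_right[symmetric])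
  also have "(\<Sum>i\<in>I. (a i + e * b i)) = (\<Sum>i\<in>I. a i) + e * (\<Sum>i\<in>I. b i)"
    by (simp add: sum.distrib sum_distrib_left)
  finally show ?thesis by (simp add: mult.commute)
qed

lemma expand:
  fixes f :: "nat \<Rightarrow> nat \<Rightarrow> complex"
  assumes orth: "\<forall>l\<in>{1..N}. \<forall>m\<in>{1..N}. (\<Sum>j=1..N. f l j * cnj (f m j)) = (if l = m then 1 else 0)"
    and j: "j \<in> {1..N}"
  shows "g j = (\<Sum>l=1..N. (\<Sum>i=1..N. g i * cnj (f l i)) * f l j)"
proof -
  have "(\<Sum>l=1..N. (\<Sum>i=1..N. g i * cnj (f l i)) * f l j)
      = (\<Sum>l=1..N. \<Sum>i=1..N. g i * (cnj (f l i) * f l j))"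
    by (simp add: sum_distrib_right mult.assoc)
  also have "\<dots> = (\<Sum>i=1..N. g i * (\<Sum>l=1..N. cnj (f l i) * f l j))"
    by (subst sum.swap) (simp add: sum_distrib_left)
  also have "\<dots> = (\<Sum>i=1..N. g i * (if i = j then 1 else 0))"
    using onb_complete[OF orth _ j] by (intro sum.cong) auto
  also have "\<dots> = g j" using j by (simp add: if_distrib cong: if_cong)
  finally show ?thesis by simp
qed

theorem proposition3p7:
  fixes N S :: nat and L :: "nat \<Rightarrow> nat" and Wd :: "nat \<Rightarrow> nat \<Rightarrow> real"
    and \<beta> \<alpha> :: "nat \<Rightarrow> real" and k :: int
    and f :: "nat \<Rightarrow> nat \<Rightarrow> complex" and lam :: "nat \<Rightarrow> complex"
  assumes "1 \<le> N" and "1 \<le> S" and "S \<le> N"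
    and "band_width N S L"
    and "admissible N S L Wd"
    and "\<beta> \<in> Gamma_set S"
    and "banded S L \<beta> \<alpha>"
    and "S = 1 \<or> k = 0"
    and orthonormal: "\<forall>l\<in>{1..N}. \<forall>m\<in>{1..N}.
           (\<Sum>j=1..N. f l j * cnj (f m j)) = (if l = m then 1 else 0)"
    and eigen: "\<forall>l\<in>{1..N}. \<forall>i\<in>{1..N}.
           (\<Sum>j=1..N. cis (- 2 * pi * of_int k * \<beta> 1) * complex_of_real (Wd i j) * f l j)
             = lam l * f l i"
  shows "\<forall>\<epsilon>>0.
     (\<forall>l\<in>{1..N}. is_eigenfunction N (transfer_op N (W_eps \<epsilon> Wd) \<alpha>) (fourier_fun (f l) k)
                   (cis (- 2 * pi * of_int k * \<beta> 1) + complex_of_real \<epsilon> * lam l))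
   \<and> (\<forall>g mu. is_eigenfunction N (transfer_op N (W_eps \<epsilon> Wd) \<alpha>) (fourier_fun g k) mu \<longrightarrow>
        (\<exists>l\<in>{1..N}. \<exists>c. (\<forall>j\<in>{1..N}. g j = c * f l j)
            \<and> mu = cis (- 2 * pi * of_int k * \<beta> 1) + complex_of_real \<epsilon> * lam l))
   \<and> (\<forall>l\<in>{1..N}. \<forall>g. is_eigenfunction N (transfer_op N (W_eps \<epsilon> Wd) \<alpha>) (fourier_fun g k)
            (cis (- 2 * pi * of_int k * \<beta> 1) + complex_of_real \<epsilon> * lam l) \<longrightarrow>
        (\<forall>H. \<forall>j\<in>{1..N}. \<forall>x. L2_proj N (fourier_fun g k) H j x = L2_proj N (fourier_fun (f l) k) H j x))"
proof (intro allI impI)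
  fix \<epsilon> :: real assume epos: "\<epsilon> > 0"
  note orth = orthonormal
  define c where "c = cis (- 2 * pi * of_int k * \<beta> 1)"
  have c0: "c \<noteq> 0" by (simp add: c_def)
  define inn where "inn g l = (\<Sum>i=1..N. g i * cnj (f l i))" for g :: "nat \<Rightarrow> complex" and l
  define \<mu> where "\<mu> l = lam l / c" for l
  have lam_mu: "lam l = c * \<mu> l" for l using c0 by (simp add: \<mu>_def)
  have adm: "admissible N S L Wd" by fact
  have sym: "\<And>i j. i \<in> {1..N} \<Longrightarrow> j \<in> {1..N} \<Longrightarrow> Wd i j = Wd j i"
    using adm unfolding admissible_def by blast
  have eigW: "(\<Sum>j=1..N. complex_of_real (Wd i j) * f l j) = \<mu> l * f l i"
    if l: "l \<in> {1..N}" and i: "i \<in> {1..N}" for l i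
  proof -
    have "c * (\<Sum>j=1..N. complex_of_real (Wd i j) * f l j) = lam l * f l i"
      using eigen l i by (simp add: c_def sum_distrib_left mult.assoc)
    thus ?thesis using c0 by (simp add: \<mu>_def field_simps)
  qed
  have expd: "g j = (\<Sum>l=1..N. inn g l * f l j)" if "j \<in> {1..N}" for g j
    unfolding inn_def by (rule expand[OF orth that])
  have mu_real: "cnj (\<mu> l) = \<mu> l" if l: "l \<in> {1..N}" for l
  proof -
    define Q where "Q = (\<Sum>i=1..N. \<Sum>j=1..N. complex_of_real (Wd i j) * f l j * cnj (f l i))"
    have "Q = (\<Sum>i=1..N. \<mu> l * f l i * cnj (f l i))"
      unfolding Q_def using eigW[OF l] by (intro sum.cong) (auto simp: sum_distrib_right[symmetric])
    also have "\<dots> = \<mu> l * (\<Sum>i=1..N. f l i * cnj (f l i))"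
      by (simp add: sum_distrib_left mult.assoc)
    also have "\<dots> = \<mu> l" using orth l by simp
    finally have Q: "Q = \<mu> l" .
    have "cnj Q = (\<Sum>i=1..N. \<Sum>j=1..N. complex_of_real (Wd i j) * cnj (f l j) * f l i)"
      unfolding Q_def by simp
    also have "\<dots> = (\<Sum>j=1..N. \<Sum>i=1..N. complex_of_real (Wd j i) * cnj (f l j) * f l i)"
      by (subst sum.swap) (intro sum.cong refl, simp add: sym mult_ac)
    also have "\<dots> = Q" unfolding Q_def by (simp add: mult_ac)
    finally show ?thesis using Q by simp
  qed
  have key: "(\<mu> l - \<nu>) * inn g l = 0"
    if ev: "\<forall>i\<in>{1..N}. (\<Sum>j=1..N. complex_of_real (Wd i j) * g j) = \<nu> * g i"
      and l: "l \<in> {1..N}" for g \<nu> l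
  proof -
    have "\<nu> * inn g l = (\<Sum>i=1..N. \<nu> * g i * cnj (f l i))"
      unfolding inn_def by (simp add: sum_distrib_left mult.assoc)
    also have "\<dots> = (\<Sum>i=1..N. \<Sum>j=1..N. complex_of_real (Wd i j) * g j * cnj (f l i))"
      using ev by (intro sum.cong) (auto simp: sum_distrib_right[symmetric])
    also have "\<dots> = (\<Sum>j=1..N. g j * cnj (\<Sum>i=1..N. complex_of_real (Wd j i) * f l i))"
      by (subst sum.swap) (intro sum.cong refl, simp add: sym sum_distrib_left mult_ac)
    also have "\<dots> = (\<Sum>j=1..N. g j * cnj (\<mu> l * f l j))"
      using eigW[OF l] by (intro sum.cong) auto
    also have "\<dots> = \<mu> l * inn g l"
      using mu_real[OF l] unfolding inn_def by (simp add: sum_distrib_left mult_ac)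
    finally show ?thesis by (simp add: algebra_simps) (metis mult_cancel_right)
  qed
  have eigval: "\<exists>l\<in>{1..N}. \<nu> = \<mu> l \<and> inn g l \<noteq> 0"
    if ev: "\<forall>i\<in>{1..N}. (\<Sum>j=1..N. complex_of_real (Wd i j) * g j) = \<nu> * g i"
      and nz: "\<exists>i\<in>{1..N}. g i \<noteq> 0" for g \<nu>
  proof -
    obtain i where i: "i \<in> {1..N}" "g i \<noteq> 0" using nz by blast
    have "\<exists>l\<in>{1..N}. inn g l \<noteq> 0"
    proof (rule ccontr)
      assume "\<not> ?thesis"
      hence "g i = 0" using expd[OF i(1), of g] by simp
      thus False using i by simp
    qed
    then obtain l where l: "l \<in> {1..N}" "inn g l \<noteq> 0" by blast
    thus ?thesis using key[OF ev l(1)] by auto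
  qed
  have inj_mu: "inj_on \<mu> {1..N}"
  proof -
    define E where "E = {m. is_eigenvalue_on {1..N} Wd m}"
    have cE: "card E = N" using adm unfolding admissible_def has_distinct_eigenvalues_on_def E_def by simp
    hence fE: "finite E" using cE \<open>1 \<le> N\<close> by (intro card_ge_0_finite) simp
    have sub: "complex_of_real ` E \<subseteq> \<mu> ` {1..N}"
    proof
      fix z assume "z \<in> complex_of_real ` E"
      then obtain m where m: "m \<in> E" "z = complex_of_real m" by blast
      then obtain v :: "nat \<Rightarrow> real" where v: "\<exists>i\<in>{1..N}. v i \<noteq> 0"
        "\<forall>i\<in>{1..N}. (\<Sum>j\<in>{1..N}. Wd i j * v j) = m * v i"
        unfolding E_def is_eigenvalue_on_def by blast
      have "\<forall>i\<in>{1..N}. (\<Sum>j=1..N. complex_of_real (Wd i j) * complex_of_real (v j)) = complex_of_real m * complex_of_real (v i)"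
      proof
        fix i assume "i \<in> {1..N}"
        hence "complex_of_real (\<Sum>j\<in>{1..N}. Wd i j * v j) = complex_of_real (m * v i)" using v(2) by simp
        thus "(\<Sum>j=1..N. complex_of_real (Wd i j) * complex_of_real (v j)) = complex_of_real m * complex_of_real (v i)"
          by simp
      qed
      moreover have "\<exists>i\<in>{1..N}. complex_of_real (v i) \<noteq> 0" using v(1) by simp
      ultimately obtain l where "l \<in> {1..N}" "complex_of_real m = \<mu> l"
        using eigval[of "\<lambda>j. complex_of_real (v j)" "complex_of_real m"] by blast
      thus "z \<in> \<mu> ` {1..N}" using m by auto
    qed
    have "N = card (complex_of_real ` E)" using cE by (simp add: card_image inj_on_def)
    also have "\<dots> \<le> card (\<mu> ` {1..N})" by (rule card_mono[OF _ sub]) simp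
    finally have "card {1..N} \<le> card (\<mu> ` {1..N})" by simp
    moreover have "card (\<mu> ` {1..N}) \<le> card {1..N}" by (rule card_image_le) simp
    ultimately show ?thesis by (intro eq_card_imp_inj_on) auto
  qed
  have shift: "cis (2 * pi * of_int k * (x - \<alpha> j)) = cis (2 * pi * of_int k * x) * c"
    if j: "j \<in> {1..N}" for j x
  proof (cases "k = 0")
    case True thus ?thesis by (simp add: c_def)
  next
    case False
    hence S1: "S = 1" using \<open>S = 1 \<or> k = 0\<close> by simp
    have "L 1 = N" using \<open>band_width N S L\<close> S1 by (simp add: band_width_def)
    hence "j \<in> band L 1" using j by (simp add: band_def band_end_def)
    hence "\<alpha> j = \<beta> 1" using \<open>banded S L \<beta> \<alpha>\<close> S1 by (simp add: banded_def)
    thus ?thesis by (simp add: c_def cis_mult algebra_simps)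
  qed
  have top: "transfer_op N (W_eps \<epsilon> Wd) \<alpha> (fourier_fun g k) j x
      = cis (2 * pi * of_int k * x) * c * (g j + complex_of_real \<epsilon> * (\<Sum>j'=1..N. complex_of_real (Wd j j') * g j'))"
    if j: "j \<in> {1..N}" for g j x
  proof -
    have "transfer_op N (W_eps \<epsilon> Wd) \<alpha> (fourier_fun g k) j x
       = (\<Sum>j'=1..N. ((if j = j' then 1 else 0) * g j' + complex_of_real \<epsilon> * (complex_of_real (Wd j j') * g j')) * (cis (2 * pi * of_int k * x) * c))"
      unfolding transfer_op_def fourier_fun_def W_eps_def shift[OF j]
      by (intro sum.cong refl) (simp add: distrib_left distrib_right mult_ac)
    also have "\<dots> = cis (2 * pi * of_int k * x) * c * ((\<Sum>j'=1..N. (if j = j' then 1 else 0) * g j') + complex_of_real \<epsilon> * (\<Sum>j'=1..N. complex_of_real (Wd j j') * g j'))"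
      by (rule aux_distr)
    also have "(\<Sum>j'=1..N. (if j = j' then 1 else 0) * g j') = g j"
    proof -
      have "(\<Sum>j'=1..N. (if j = j' then 1 else 0) * g j') = (\<Sum>j'\<in>{1..N}. if j = j' then g j' else 0)"
        by (rule sum.cong) auto
      also have "\<dots> = g j" using j by simp
      finally show ?thesis .
    qed
    finally show ?thesis .
  qed
  have part2: "\<exists>l\<in>{1..N}. \<exists>c'. (\<forall>j\<in>{1..N}. g j = c' * f l j) \<and> mu = c + complex_of_real \<epsilon> * lam l"
    if ef: "is_eigenfunction N (transfer_op N (W_eps \<epsilon> Wd) \<alpha>) (fourier_fun g k) mu" for g mu
  proof -
    from ef obtain j0 x0 where j0: "j0 \<in> {1..N}" "fourier_fun g k j0 x0 \<noteq> 0"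
      unfolding is_eigenfunction_def by blast
    hence nz: "\<exists>i\<in>{1..N}. g i \<noteq> 0" by (auto simp: fourier_fun_def)
    define \<nu> where "\<nu> = (mu / c - 1) / complex_of_real \<epsilon>"
    have ev: "\<forall>i\<in>{1..N}. (\<Sum>j=1..N. complex_of_real (Wd i j) * g j) = \<nu> * g i"
    proof
      fix i assume i: "i \<in> {1..N}"
      have "c * (g i + complex_of_real \<epsilon> * (\<Sum>j'=1..N. complex_of_real (Wd i j') * g j')) = mu * g i"
        using ef i top[OF i, of g 0] unfolding is_eigenfunction_def fourier_fun_def by simp
      thus "(\<Sum>j=1..N. complex_of_real (Wd i j) * g j) = \<nu> * g i"
        using c0 epos unfolding \<nu>_def by (simp add: field_simps)
    qed
    obtain l where l: "l \<in> {1..N}" "\<nu> = \<mu> l" "inn g l \<noteq> 0" using eigval[OF ev nz] by blast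
    have oth: "inn g l' = 0" if "l' \<in> {1..N}" "l' \<noteq> l" for l'
    proof -
      have "\<mu> l' \<noteq> \<mu> l" using inj_onD[OF inj_mu _ that(1) l(1)] that(2) by blast
      hence "\<mu> l' \<noteq> \<nu>" using l(2) by simp
      thus ?thesis using key[OF ev that(1)] by simp
    qed
    have "\<forall>j\<in>{1..N}. g j = inn g l * f l j"
    proof
      fix j assume j: "j \<in> {1..N}"
      have "g j = (\<Sum>l'=1..N. inn g l' * f l' j)" by (rule expd[OF j])
      also have "\<dots> = (\<Sum>l'\<in>{1..N}. if l' = l then inn g l * f l j else 0)"
        using oth by (intro sum.cong) auto
      also have "\<dots> = inn g l * f l j" using l(1) by simp
      finally show "g j = inn g l * f l j" .
    qed
    moreover have "mu = c + complex_of_real \<epsilon> * lam l"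
    proof -
      have e0: "complex_of_real \<epsilon> \<noteq> 0" using epos by simp
      have "mu / c - 1 = complex_of_real \<epsilon> * \<mu> l" using l(2) e0 unfolding \<nu>_def
        by (simp add: divide_eq_eq mult.commute)
      hence "mu / c = 1 + complex_of_real \<epsilon> * \<mu> l" by (simp add: algebra_simps)
      hence "mu = c * (1 + complex_of_real \<epsilon> * \<mu> l)" using c0 by (simp add: divide_eq_eq mult.commute)
      thus ?thesis unfolding lam_mu by (simp add: algebra_simps)
    qed
    ultimately show ?thesis using l(1) by blast
  qed
  show "(\<forall>l\<in>{1..N}. is_eigenfunction N (transfer_op N (W_eps \<epsilon> Wd) \<alpha>) (fourier_fun (f l) k)
                   (cis (- 2 * pi * of_int k * \<beta> 1) + complex_of_real \<epsilon> * lam l))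
   \<and> (\<forall>g mu. is_eigenfunction N (transfer_op N (W_eps \<epsilon> Wd) \<alpha>) (fourier_fun g k) mu \<longrightarrow>
        (\<exists>l\<in>{1..N}. \<exists>c. (\<forall>j\<in>{1..N}. g j = c * f l j)
            \<and> mu = cis (- 2 * pi * of_int k * \<beta> 1) + complex_of_real \<epsilon> * lam l))
   \<and> (\<forall>l\<in>{1..N}. \<forall>g. is_eigenfunction N (transfer_op N (W_eps \<epsilon> Wd) \<alpha>) (fourier_fun g k)
            (cis (- 2 * pi * of_int k * \<beta> 1) + complex_of_real \<epsilon> * lam l) \<longrightarrow>
        (\<forall>H. \<forall>j\<in>{1..N}. \<forall>x. L2_proj N (fourier_fun g k) H j x = L2_proj N (fourier_fun (f l) k) H j x))"
    unfolding c_def[symmetric]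
  proof (intro conjI ballI allI impI)
    fix l assume l: "l \<in> {1..N}"
    have "\<exists>j\<in>{1..N}. f l j \<noteq> 0"
    proof (rule ccontr)
      assume "\<not> ?thesis"
      hence "(\<Sum>j=1..N. f l j * cnj (f l j)) = 0" by simp
      thus False using orth l by simp
    qed
    then obtain j where j: "j \<in> {1..N}" "f l j \<noteq> 0" by blast
    have "fourier_fun (f l) k j 0 \<noteq> 0" using j by (simp add: fourier_fun_def)
    moreover have "\<forall>j\<in>{1..N}. \<forall>x. transfer_op N (W_eps \<epsilon> Wd) \<alpha> (fourier_fun (f l) k) j x
        = (c + complex_of_real \<epsilon> * lam l) * fourier_fun (f l) k j x"
      using top eigW[OF l] by (simp add: fourier_fun_def lam_mu algebra_simps)
    ultimately show "is_eigenfunction N (transfer_op N (W_eps \<epsilon> Wd) \<alpha>) (fourier_fun (f l) k)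
                   (c + complex_of_real \<epsilon> * lam l)"
      unfolding is_eigenfunction_def using j(1) by blast
  next
    fix g mu assume "is_eigenfunction N (transfer_op N (W_eps \<epsilon> Wd) \<alpha>) (fourier_fun g k) mu"
    thus "\<exists>l\<in>{1..N}. \<exists>c'. (\<forall>j\<in>{1..N}. g j = c' * f l j) \<and> mu = c + complex_of_real \<epsilon> * lam l"
      by (rule part2)
  next
    fix l g H j x
    assume l: "l \<in> {1..N}" and ef: "is_eigenfunction N (transfer_op N (W_eps \<epsilon> Wd) \<alpha>) (fourier_fun g k)
            (c + complex_of_real \<epsilon> * lam l)" and j: "j \<in> {1..N}"
    obtain l' c' where l': "l' \<in> {1..N}" "\<forall>j\<in>{1..N}. g j = c' * f l' j"
      "c + complex_of_real \<epsilon> * lam l = c + complex_of_real \<epsilon> * lam l'"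
      using part2[OF ef] by blast
    have "\<mu> l = \<mu> l'" using l'(3) epos c0 by (simp add: lam_mu)
    hence "l' = l" using inj_onD[OF inj_mu _ l l'(1)] by simp
    hence gc: "\<forall>j\<in>{1..N}. g j = c' * f l j" using l'(2) by simp
    have "c' \<noteq> 0"
    proof
      assume "c' = 0"
      thus False using ef gc unfolding is_eigenfunction_def fourier_fun_def by auto
    qed
    define F where "F = fourier_fun (f l) k"
    have G: "fourier_fun g k j' y = c' * F j' y" if "j' \<in> {1..N}" for j' y
      using gc that by (simp add: F_def fourier_fun_def)
    have int1: "integral {0..1} (\<lambda>y. H1 j' y * cnj (fourier_fun g k j' y)) = cnj c' * integral {0..1} (\<lambda>y. H1 j' y * cnj (F j' y))"
      if "j' \<in> {1..N}" for j' and H1 :: "nat \<Rightarrow> real \<Rightarrow> complex"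
    proof -
      have "(\<lambda>y. H1 j' y * cnj (fourier_fun g k j' y)) = (\<lambda>y. cnj c' * (H1 j' y * cnj (F j' y)))"
        using G[OF that] by (intro ext) (simp add: mult_ac)
      thus ?thesis by simp
    qed
    have inner_c: "L2_inner N H1 (fourier_fun g k) = cnj c' * L2_inner N H1 F" for H1
    proof -
      have "(\<Sum>j'=1..N. integral {0..1} (\<lambda>y. H1 j' y * cnj (fourier_fun g k j' y)))
          = (\<Sum>j'=1..N. cnj c' * integral {0..1} (\<lambda>y. H1 j' y * cnj (F j' y)))"
        using int1 by (intro sum.cong) auto
      thus ?thesis unfolding L2_inner_def by (simp add: sum_distrib_left[symmetric])
    qed
    have i1: "L2_inner N H (fourier_fun g k) = cnj c' * L2_inner N H F" by (rule inner_c)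
    have "L2_inner N (fourier_fun g k) F = c' * L2_inner N F F"
    proof -
      have "(\<Sum>j'=1..N. integral {0..1} (\<lambda>y. fourier_fun g k j' y * cnj (F j' y)))
          = (\<Sum>j'=1..N. c' * integral {0..1} (\<lambda>y. F j' y * cnj (F j' y)))"
      proof (intro sum.cong refl)
        fix j' assume "j' \<in> {1..N}"
        hence "(\<lambda>y. fourier_fun g k j' y * cnj (F j' y)) = (\<lambda>y. c' * (F j' y * cnj (F j' y)))"
          using G by (intro ext) (simp add: mult_ac)
        thus "integral {0..1} (\<lambda>y. fourier_fun g k j' y * cnj (F j' y)) = c' * integral {0..1} (\<lambda>y. F j' y * cnj (F j' y))"
          by simp
      qed
      thus ?thesis unfolding L2_inner_def by (simp add: sum_distrib_left[symmetric])
    qed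
    hence i2: "L2_inner N (fourier_fun g k) (fourier_fun g k) = c' * cnj c' * L2_inner N F F"
      using inner_c[of "fourier_fun g k"] by simp
    show "L2_proj N (fourier_fun g k) H j x = L2_proj N (fourier_fun (f l) k) H j x"
      unfolding L2_proj_def F_def[symmetric] i1 i2 G[OF j]
      using \<open>c' \<noteq> 0\<close> by (cases "L2_inner N F F = 0") (auto simp: field_simps)
  qed
qed

end
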